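(* Let $R$ be an associative ring with identity and involution $*$, and let $a\in R^{\#}\cap R^{\dagger}$. Then $a\in R^{SEP}$ if and only if $a(a^{\#})^*a^{\dagger}$ is a left $a^{\dagger}a^2$-idempotent, i.e. $(a(a^{\#})^*a^{\dagger})^2=a^{\dagger}a^2\,a(a^{\#})^*a^{\dagger}$.
   Context: An involution on $R$ is a map $x\mapsto x^*$ with $(x^* )^*=x$, $(x+y)^*=x^*+y^*$, $(xy)^*=y^*x^*$. An element $a$ is Moore–Penrose invertible if there is $b$ with $aba=a$, $bab=b$, $(ab)^*=ab$, $(ba)^*=ba$; such $b$ is unique, denoted $a^{\dagger}$, and $R^{\dagger}$ is the set of such $a$. An element $a$ is group invertible if there is $b$ with $aba=a$, $bab=b$, $ab=ba$; such $b$ is unique, denoted $a^{\#}$, and $R^{\#}$ is the set of such $a$. For $a\in R^{\#}\cap R^{\dagger}$, $a$ is SEP if $a^*=a^{\dagger}=a^{\#}$; $R^{SEP}$ denotes the set of SEP elements. For $e,c\in R$, $e$ is a left $c$-idempotent if $e^2=ce$, and a right $c$-idempotent if $e^2=ec$. *)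

theory Defs
  imports Main
begin

definition involution :: "('a::ring_1 \<Rightarrow> 'a) \<Rightarrow> bool" where
  "involution star \<longleftrightarrow> (\<forall>x. star (star x) = x) \<and> (\<forall>x y. star (x + y) = star x + star y)
     \<and> (\<forall>x y. star (x * y) = star y * star x)"

definition is_mp_inverse :: "('a::ring_1 \<Rightarrow> 'a) \<Rightarrow> 'a \<Rightarrow> 'a \<Rightarrow> bool" where
  "is_mp_inverse star a b \<longleftrightarrow> a * b * a = a \<and> b * a * b = b \<and> star (a * b) = a * b \<and> star (b * a) = b * a"

definition mp_invertible :: "('a::ring_1 \<Rightarrow> 'a) \<Rightarrow> 'a \<Rightarrow> bool" where
  "mp_invertible star a \<longleftrightarrow> (\<exists>b. is_mp_inverse star a b)"

definition mp_inv :: "('a::ring_1 \<Rightarrow> 'a) \<Rightarrow> 'a \<Rightarrow> 'a" where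
  "mp_inv star a = (THE b. is_mp_inverse star a b)"

definition is_group_inverse :: "'a::ring_1 \<Rightarrow> 'a \<Rightarrow> bool" where
  "is_group_inverse a b \<longleftrightarrow> a * b * a = a \<and> b * a * b = b \<and> a * b = b * a"

definition group_invertible :: "'a::ring_1 \<Rightarrow> bool" where
  "group_invertible a \<longleftrightarrow> (\<exists>b. is_group_inverse a b)"

definition group_inv :: "'a::ring_1 \<Rightarrow> 'a" where
  "group_inv a = (THE b. is_group_inverse a b)"

definition SEP :: "('a::ring_1 \<Rightarrow> 'a) \<Rightarrow> 'a \<Rightarrow> bool" where
  "SEP star a \<longleftrightarrow> group_invertible a \<and> mp_invertible star a
     \<and> star a = mp_inv star a \<and> mp_inv star a = group_inv a"

definition left_c_idempotent :: "'a::ring_1 \<Rightarrow> 'a \<Rightarrow> bool" where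
  "left_c_idempotent c e \<longleftrightarrow> e * e = c * e"

end

theory Submission
  imports Defs
begin

lemma gi_unique:
  fixes a b c :: "'a::ring_1"
  assumes "is_group_inverse a b" "is_group_inverse a c"
  shows "b = c"
proof -
  have h: "a*b*a = a" "b*a*b = b" "a*b = b*a" "a*c*a = a" "c*a*c = c" "a*c = c*a"
    using assms unfolding is_group_inverse_def by auto
  have b1: "b = b*b*a" using h by (metis mult.assoc)
  have b2: "b = a*b*b" using h by (metis mult.assoc)
  have c1: "c = c*c*a" using h by (metis mult.assoc)
  have c2: "c = a*c*c" using h by (metis mult.assoc)
  have "b = b*c*a"
  proof -
    have "b = b*b*(a*c*a)" using b1 h by simp
    also have "... = (b*b*a)*c*a" by (simp add: mult.assoc)
    finally show ?thesis using b1 by simp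
  qed
  hence bb: "b = b*a*c" using h by (metis mult.assoc)
  have "c = c*b*a"
  proof -
    have "c = c*c*(a*b*a)" using c1 h by simp
    also have "... = (c*c*a)*b*a" by (simp add: mult.assoc)
    finally show ?thesis using c1 by simp
  qed
  hence cc: "c = a*b*c" using h by (metis mult.assoc)
  show ?thesis using bb cc h by (metis mult.assoc)
qed

lemma mp_unique:
  fixes a b c :: "'a::ring_1"
  assumes inv: "involution star" and "is_mp_inverse star a b" "is_mp_inverse star a c"
  shows "b = c"
proof -
  have h: "a*b*a = a" "b*a*b = b" "star (a*b) = a*b" "star (b*a) = b*a"
     "a*c*a = a" "c*a*c = c" "star (a*c) = a*c" "star (c*a) = c*a"
    using assms(2,3) unfolding is_mp_inverse_def by auto
  have sm: "\<And>x y. star (x*y) = star y * star x" using inv unfolding involution_def by auto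
  have "b = b*(a*b)" using h by (simp add: mult.assoc)
  also have "... = b*star(a*b)" using h by simp
  also have "... = b*star b*star a" using sm by (simp add: mult.assoc)
  also have "star a = star (a*c*a)" using h by simp
  also have "star (a*c*a) = star a * star c * star a" using sm by (simp add: mult.assoc)
  finally have "b = b*(star b*star a)*(star c*star a)" by (simp add: mult.assoc)
  also have "... = b*star(a*b)*star(a*c)" using sm by simp
  also have "... = b*a*c" using h by (simp add: mult.assoc)
  finally have B: "b = b*a*c" .
  have "c = (c*a)*c" using h by (simp add: mult.assoc)
  also have "... = star(c*a)*c" using h by simp
  also have "... = star a*star c*c" using sm by simp
  also have "star a = star (a*b*a)" using h by simp
  also have "star (a*b*a) = star a * star b * star a" using sm by (simp add: mult.assoc)
  finally have "c = (star a * star b)*(star a*star c)*c" by (simp add: mult.assoc)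
  also have "... = star(b*a)*star(c*a)*c" using sm by simp
  also have "... = b*a*c" using h by (simp add: mult.assoc)
  finally show ?thesis using B by simp
qed


theorem theorem3p2:
  fixes star :: "'a::ring_1 \<Rightarrow> 'a" and a :: 'a
  assumes "involution star"
    and "group_invertible a" and "mp_invertible star a"
  shows "SEP star a \<longleftrightarrow>
    left_c_idempotent (mp_inv star a * a ^ 2) (a * star (group_inv a) * mp_inv star a)"
proof -
  obtain x where gx: "is_group_inverse a x" using assms(2) group_invertible_def by blast
  obtain y where my: "is_mp_inverse star a y" using assms(3) mp_invertible_def by blast
  have xdef: "group_inv a = x" unfolding group_inv_def
    using gx gi_unique by blast
  have ydef: "mp_inv star a = y" unfolding mp_inv_def
    using my mp_unique[OF assms(1)] by blast
  have ss: "\<And>z. star (star z) = z" using assms(1) unfolding involution_def by auto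
  have sm: "\<And>u v. star (u*v) = star v * star u" using assms(1) unfolding involution_def by auto
  have g1: "a*x*a = a" and g2: "x*a*x = x" and g3: "a*x = x*a"
    using gx unfolding is_group_inverse_def by auto
  have m1: "a*y*a = a" and m2: "y*a*y = y" and m3: "star (a*y) = a*y" and m4: "star (y*a) = y*a"
    using my unfolding is_mp_inverse_def by auto
  have aax: "a*a*x = a" using g1 g3 by (metis mult.assoc)
  have xxa: "x*x*a = x" using g2 g3 by (metis mult.assoc)
  have xaa: "x*a*a = a" using g1 g3 by (metis mult.assoc)
  have aaxx: "a*a*x*x = a*x" using aax by simp
  have saysa: "star a * star y * star a = star a" using m1 sm by (metis mult.assoc)
  have U1: "y*a*star x = star x"
  proof -
    have "y*a*star x = star (y*a) * star x" using m4 by simp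
    also have "... = star a * star y * star x" using sm by simp
    also have "... = star a * star y * star a * star (x*x)"
      using xxa sm by (metis mult.assoc)
    also have "... = star (x*x*a)" using saysa sm by (metis mult.assoc)
    finally show ?thesis using xxa by simp
  qed
  show ?thesis
  proof
    assume "SEP star a"
    hence e1: "star a = y" and e2: "y = x" using xdef ydef unfolding SEP_def by auto
    have sx: "star x = a" using e1 e2 ss by metis
    have e: "a * a * x = a" using aax .
    have c: "x*(a*a)*a = a*a" using xaa by (simp add: mult.assoc)
    show "left_c_idempotent (mp_inv star a * a ^ 2) (a * star (group_inv a) * mp_inv star a)"
      unfolding left_c_idempotent_def xdef ydef sx e2 power2_eq_square e c ..
  next
    assume "left_c_idempotent (mp_inv star a * a ^ 2) (a * star (group_inv a) * mp_inv star a)"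
    hence C: "(a*star x*y)*(a*star x*y) = y*(a*a)*(a*star x*y)"
      unfolding left_c_idempotent_def xdef ydef power2_eq_square .
    define P where "P t \<longleftrightarrow> y*t = a*x*y*t" for t
    have S1: "a*star x*y = a*x*(a*star x*y)" using g1 by (metis mult.assoc)
    have "P (a*a*a*star x*y)"
    proof -
      have "y*(a*a)*(a*star x*y) = a*x*((a*star x*y)*(a*star x*y))"
        using C S1 by (metis mult.assoc)
      also have "... = a*x*(y*(a*a)*(a*star x*y))" using C by simp
      finally show ?thesis unfolding P_def by (simp add: mult.assoc)
    qed
    have Pr: "\<And>t u. P t \<Longrightarrow> P (t*u)" unfolding P_def by (metis mult.assoc)
    have yas: "y*a = star a * star y" using m4 sm by metis
    have yaa: "y*a*star a = star a" using yas saysa by simp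
    have xaa': "star x * star a * star a = star a" using aax sm by (metis mult.assoc)
    have ay': "star a * star y = y*a" using yas by simp
    have yaa2: "y*(a*star a) = star a" using yaa by (simp add: mult.assoc)
    have xaa2: "star x * (star a * star a) = star a" using xaa' by (simp add: mult.assoc)
    have m12: "a*(y*a) = a" using m1 by (simp add: mult.assoc)
    have aax2: "a*(a*x) = a" using aax by (simp add: mult.assoc)
    have aaxx2: "a*(a*(x*x)) = a*x" using aaxx by (simp add: mult.assoc)
    have "P (a*a*a*star x*y*a*star a)" using \<open>P (a*a*a*star x*y)\<close> Pr by simp
    moreover have "a*a*a*star x*y*a*star a = a*a*a*star x*star a" by (simp add: mult.assoc yaa2)
    ultimately have "P (a*a*a*star x*star a)" by simp
    hence "P (a*a*a*star x*star a*star a)" using Pr by blast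
    moreover have "a*a*a*star x*star a*star a = a*a*a*star a" by (simp add: mult.assoc xaa2)
    ultimately have "P (a*a*a*star a)" by simp
    hence "P (a*a*a*star a*star y)" using Pr by blast
    moreover have "a*a*a*star a*star y = a*a*a" by (simp add: mult.assoc ay' m12)
    ultimately have "P (a*a*a)" by simp
    hence "P (a*a*a*x*x)" using Pr by blast
    moreover have "a*a*a*x*x = a" by (simp add: mult.assoc aaxx2 aax2)
    ultimately have "P a" by simp
    hence ya: "y*a = a*x*y*a" unfolding P_def by (simp add: mult.assoc)
    have axya: "a*x = y*a"
    proof -
      have "a*x = x*a*y*a" using g3 m1 by (metis mult.assoc)
      thus ?thesis using ya g3 by simp
    qed
    have "is_mp_inverse star a x" unfolding is_mp_inverse_def
      using g1 g2 g3 axya m4 by simp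
    hence yx: "y = x" using my mp_unique[OF assms(1)] by blast
    have U1': "x*a*star x = star x" using U1 yx by simp
    have C': "a*star x*star x*x = a*a*star x*x"
    proof -
      have "(a*star x*x)*(a*star x*x) = a*star x*(x*a*star x)*x" by (simp add: mult.assoc)
      also have "... = a*star x*star x*x" using U1' by simp
      finally have L: "(a*star x*x)*(a*star x*x) = a*star x*star x*x" .
      have "x*(a*a)*(a*star x*x) = (x*a*a)*a*star x*x" by (simp add: mult.assoc)
      also have "... = a*a*star x*x" using xaa by simp
      finally show ?thesis using C L yx by simp
    qed
    have pa: "star x * (x*a) = star x"
    proof -
      have "star (x*a) = x*a" using axya yx m4 by simp
      hence "star x * (x*a) = star x * (star a * star x)" using sm by simp
      also have "... = star (x*a*x)" using sm by (simp add: mult.assoc)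
      finally show ?thesis using g2 by simp
    qed
    have C2: "a*star x*star x = a*a*star x"
    proof -
      have "a*star x*star x*x*a = a*a*star x*x*a" using C' by simp
      thus ?thesis using pa by (simp add: mult.assoc)
    qed
    have C3: "star x*star x = a*star x"
    proof -
      have "x*(a*star x*star x) = x*(a*a*star x)" using C2 by simp
      hence "(x*a*star x)*star x = (x*a*a)*star x" by (simp add: mult.assoc)
      thus ?thesis using U1' xaa by simp
    qed
    have "star x*star x*star a*star a = a*star x*star a*star a" using C3 by simp
    hence "star (a*a*x*x) = a*star (a*a*x)" using sm by (simp add: mult.assoc)
    hence C4: "star (a*x) = a*star a" using aaxx aax by simp
    have hx: "star (a*x) = a*x" using axya yx m4 by simp
    have "x = x*a*x" using g2 by simp
    also have "... = x*(a*star a)" using C4 hx by (simp add: mult.assoc)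
    also have "... = (a*x)*star a" using g3 by (simp add: mult.assoc)
    also have "... = star (star (a*x)) * star a" using ss by simp
    also have "... = star (a * star (a*x))" using sm by simp
    also have "... = star (a*a*x)" using hx by (simp add: mult.assoc)
    finally have xa: "x = star a" using aax by simp
    show "SEP star a" unfolding SEP_def xdef ydef using assms(2,3) xa yx by simp
  qed
qed

end
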